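(* Let $\mathcal{A},\mathcal{B}\subseteq\mathcal{P}_\infty(\mathbb{N})$ be hereditary orthogonal families. Assume $\mathcal{A}$ is analytic and not countably generated in $\mathcal{B}^\perp$. Then there is a one-to-one map $\phi:\Sigma\to\mathbb{N}$ such that, with $\mathcal{E}=\{\phi^{-1}(A):A\in\mathcal{A}\}$ and $\mathcal{H}=\{\phi^{-1}(B):B\in\mathcal{B}\}$: (i) for every $\sigma\in[\Sigma]$, the set $\{\sigma|n:n\in\mathbb{N}\}$ belongs to $\mathcal{E}$; (ii) for every $t\in\Sigma$, the set $\{t\cup\{n\}:n\in\mathbb{N},\ t<\{n\}\}$ belongs to $\mathcal{H}$.
   Context: $\Sigma$ is the tree of all strictly increasing finite sequences of natural numbers (ordered by end-extension), each element also viewed as a finite subset of $\mathbb{N}$; for $s,t\in\Sigma$ nonempty, $s<t$ means $\max s<\min t$, and $\varnothing<t$ for all nonempty $t$; $t\cup\{n\}$ with $t<\{n\}$ is the one-point extension. $[\Sigma]$ is the set of infinite strictly increasing sequences $\sigma$, and $\sigma|n$ is its initial segment of length $n$. $\mathcal{P}_\infty(X)$: infinite subsets of $X$ (topology of $2^X$). Hereditary: closed under infinite subsets. Orthogonal: $A\cap B$ finite for all $A\in\mathcal{A}$, $B\in\mathcal{B}$; $\mathcal{B}^\perp$ is the set of infinite sets almost disjoint from every member of $\mathcal{B}$. $\mathcal{A}$ is countably generated in $\mathcal{D}$ if there are $D_n\in\mathcal{D}$ such that each $A\in\mathcal{A}$ has $A\setminus D_n$ finite for some $n$. *)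

theory Defs
  imports "HOL-Analysis.Analysis"
begin

text \<open>Subsets of nat are identified with points of the Cantor space 2^N = nat => bool
  (product topology, bool discrete); Baire space is nat => nat (product topology, nat discrete).\<close>
definition analytic_fam :: "nat set set \<Rightarrow> bool" where
  "analytic_fam \<A> \<longleftrightarrow> \<A> = {} \<or>
     (\<exists>f :: (nat \<Rightarrow> nat) \<Rightarrow> (nat \<Rightarrow> bool).
        continuous_on UNIV f \<and> (\<lambda>x. {n. f x n}) ` UNIV = \<A>)"

definition hereditary :: "nat set set \<Rightarrow> bool" where
  "hereditary \<A> \<longleftrightarrow> (\<forall>A\<in>\<A>. \<forall>C. C \<subseteq> A \<and> infinite C \<longrightarrow> C \<in> \<A>)"

definition orthogonal :: "nat set set \<Rightarrow> nat set set \<Rightarrow> bool" where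
  "orthogonal \<A> \<B> \<longleftrightarrow> (\<forall>A\<in>\<A>. \<forall>B\<in>\<B>. finite (A \<inter> B))"

definition perp :: "nat set set \<Rightarrow> nat set set" where
  "perp \<B> = {C. infinite C \<and> (\<forall>B\<in>\<B>. finite (C \<inter> B))}"

definition countably_generated_in :: "nat set set \<Rightarrow> nat set set \<Rightarrow> bool" where
  "countably_generated_in \<A> \<D> \<longleftrightarrow>
     (\<exists>\<C>. \<C> \<subseteq> \<D> \<and> countable \<C> \<and> (\<forall>A\<in>\<A>. \<exists>D\<in>\<C>. finite (A - D)))"

text \<open>The tree Sigma: strictly increasing finite sequences = finite subsets of nat.\<close>
definition Sigma_tree :: "nat set set" where
  "Sigma_tree = {s. finite s}"

text \<open>Initial segment sigma|n of an infinite strictly increasing sequence.\<close>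
definition restr :: "(nat \<Rightarrow> nat) \<Rightarrow> nat \<Rightarrow> nat set" where
  "restr \<sigma> n = \<sigma> ` {..<n}"

end

theory Submission imports Defs "HOL-Library.Nat_Bijection" begin

lemma cont_force:
  fixes f :: "(nat \<Rightarrow> nat) \<Rightarrow> (nat \<Rightarrow> bool)"
  assumes "continuous_on UNIV f" "f x k"
  shows "\<exists>n. \<forall>y. (\<forall>i<n. y i = x i) \<longrightarrow> f y k"
proof -
  have c: "continuous_on UNIV (\<lambda>x. f x k)"
    by (rule continuous_on_product_then_coordinatewise[OF assms(1)])
  have o: "open ((\<lambda>x. f x k) -` {True})"
    using c by (metis continuous_on_open_vimage open_UNIV open_discrete Int_UNIV_right)
  hence "openin (product_topology (\<lambda>i. euclidean) UNIV) ((\<lambda>x. f x k) -` {True})"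
    by (simp add: open_fun_def)
  moreover have "x \<in> (\<lambda>x. f x k) -` {True}" using assms(2) by simp
  ultimately have "\<exists>X. x \<in> (\<Pi>\<^sub>E i\<in>UNIV. X i) \<and> (\<forall>i. openin euclidean (X i)) \<and> finite {i. X i \<noteq> topspace euclidean} \<and> (\<Pi>\<^sub>E i\<in>UNIV. X i) \<subseteq> (\<lambda>x. f x k) -` {True}"
    by (rule product_topology_open_contains_basis)
  then obtain X where X: "x \<in> (\<Pi>\<^sub>E i\<in>UNIV. X i)" "finite {i. X i \<noteq> UNIV}"
     "(\<Pi>\<^sub>E i\<in>UNIV. X i) \<subseteq> (\<lambda>x. f x k) -` {True}" by auto
  define I where "I = {i. X i \<noteq> UNIV}"
  have fI: "finite I" using X(2) by (simp add: I_def)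
  show ?thesis
  proof (intro exI allI impI)
    fix y :: "nat \<Rightarrow> nat" assume h: "\<forall>i<Suc (Max (insert 0 I)). y i = x i"
    have "y \<in> (\<Pi>\<^sub>E i\<in>UNIV. X i)"
    proof (simp add: PiE_def Pi_def, intro allI)
      fix i show "y i \<in> X i"
      proof (cases "i \<in> I")
        case True
        hence "i < Suc (Max (insert 0 I))" using fI by (simp add: le_imp_less_Suc)
        thus ?thesis using h X(1) by auto
      next
        case False thus ?thesis by (simp add: I_def)
      qed
    qed
    thus "f y k" using X(3) by auto
  qed
qed

definition cyl :: "nat list \<Rightarrow> (nat\<Rightarrow>nat) set" where "cyl l = {x. \<forall>i<length l. x i = l!i}"
definition fam :: "((nat \<Rightarrow> nat) \<Rightarrow> (nat \<Rightarrow> bool)) \<Rightarrow> nat list \<Rightarrow> nat set set" where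
  "fam f l = (\<lambda>x. {n. f x n}) ` cyl l"
definition bad where "bad f B l = (\<not> countably_generated_in (fam f l) (perp B))"
definition forces where "forces f l k = (\<forall>x\<in>cyl l. f x k)"
definition ext :: "nat list \<Rightarrow> nat list \<Rightarrow> bool" where
  "ext l l' = (length l < length l' \<and> take (length l) l' = l)"
definition Kset where "Kset f B l = {k. \<exists>l'. ext l l' \<and> bad f B l' \<and> forces f l' k}"

lemma cyl_map: "x \<in> cyl l \<Longrightarrow> map x [0..<length l] = l"
  by (rule nth_equalityI) (auto simp: cyl_def)

lemma key:
  fixes f :: "(nat \<Rightarrow> nat) \<Rightarrow> (nat \<Rightarrow> bool)"
  assumes cont: "continuous_on UNIV f" and inf: "\<forall>x. infinite {n. f x n}" and b: "bad f B l"
  shows "\<exists>B0\<in>B. infinite (Kset f B l \<inter> B0)"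
proof (rule ccontr)
  define K where "K = Kset f B l"
  assume "\<not> ?thesis"
  hence H: "\<forall>B0\<in>B. finite (K \<inter> B0)" by (auto simp: K_def)
  define G where "G = {l'. ext l l' \<and> \<not> bad f B l'}"
  have cG: "countable G" by (rule countable_subset[of _ UNIV]) auto
  define CG where "CG g = (SOME C. C \<subseteq> perp B \<and> countable C \<and> (\<forall>A\<in>fam f g. \<exists>D\<in>C. finite (A - D)))" for g
  have CGp: "CG g \<subseteq> perp B \<and> countable (CG g) \<and> (\<forall>A\<in>fam f g. \<exists>D\<in>CG g. finite (A - D))" if "g \<in> G" for g
  proof -
    from that have "\<exists>C. C \<subseteq> perp B \<and> countable C \<and> (\<forall>A\<in>fam f g. \<exists>D\<in>C. finite (A - D))"
      by (auto simp add: G_def bad_def countably_generated_in_def)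
    thus ?thesis unfolding CG_def by (rule someI_ex)
  qed
  define C where "C = (\<Union>g\<in>G. CG g) \<union> (if infinite K then {K} else {})"
  have "countably_generated_in (fam f l) (perp B)"
    unfolding countably_generated_in_def
  proof (intro exI conjI)
    show "countable C" unfolding C_def using cG CGp by (intro countable_Un countable_UN) auto
    show "C \<subseteq> perp B" unfolding C_def using CGp H by (auto simp: perp_def)
    show "\<forall>A\<in>fam f l. \<exists>D\<in>C. finite (A - D)"
    proof
      fix a assume "a \<in> fam f l"
      then obtain x where x: "x \<in> cyl l" "a = {n. f x n}" by (auto simp: fam_def)
      show "\<exists>D\<in>C. finite (a - D)"
      proof (cases "\<exists>n>length l. \<not> bad f B (map x [0..<n])")
        case True
        then obtain n where n: "n > length l" "\<not> bad f B (map x [0..<n])" by auto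
        define g where "g = map x [0..<n]"
        have "take (length l) g = map x [0..<length l]" using n(1)
          by (simp add: g_def take_map)
        hence "ext l g" using n(1) cyl_map[OF x(1)] by (simp add: ext_def g_def)
        hence gG: "g \<in> G" using n(2) by (simp add: G_def g_def)
        have "x \<in> cyl g" by (simp add: cyl_def g_def)
        hence "a \<in> fam f g" using x(2) by (auto simp: fam_def)
        then obtain D where "D \<in> CG g" "finite (a - D)" using CGp[OF gG] by blast
        thus ?thesis using gG unfolding C_def by blast
      next
        case False
        have "a \<subseteq> K"
        proof
          fix k assume "k \<in> a"
          hence "f x k" using x(2) by simp
          then obtain n0 where n0: "\<forall>y. (\<forall>i<n0. y i = x i) \<longrightarrow> f y k"
            using cont_force[OF cont] by blast
          define n where "n = max n0 (Suc (length l))"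
          define g where "g = map x [0..<n]"
          have "take (length l) g = map x [0..<length l]"
            by (simp add: g_def take_map n_def min_def)
          hence e: "ext l g" using cyl_map[OF x(1)] by (simp add: ext_def g_def n_def)
          have bg: "bad f B g" using False by (simp add: g_def n_def)
          have "forces f g k" unfolding forces_def
          proof
            fix y assume "y \<in> cyl g"
            hence "\<forall>i<n0. y i = x i" by (auto simp: cyl_def g_def n_def)
            thus "f y k" using n0 by blast
          qed
          thus "k \<in> K" using e bg by (auto simp: K_def Kset_def)
        qed
        moreover have "infinite a" using inf x(2) by simp
        ultimately have "infinite K" using finite_subset by blast
        hence "K \<in> C" by (simp add: C_def)
        moreover have "a - K = {}" using \<open>a \<subseteq> K\<close> by blast
        ultimately show ?thesis by (metis finite.emptyI)
      qed
    qed
  qed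
  thus False using b by (simp add: bad_def)
qed

definition Bsel where "Bsel f B u = (SOME B0. B0 \<in> B \<and> infinite (Kset f B u \<inter> B0))"
definition KK where "KK f B u = Kset f B u \<inter> Bsel f B u"
definition W where "W f B u k = (SOME l'. ext u l' \<and> bad f B l' \<and> forces f l' k)"
definition par :: "nat set \<Rightarrow> nat set" where "par s = s - {Max s}"
definition pcode :: "nat \<Rightarrow> nat" where "pcode c = set_encode (par (set_decode c))"
definition step where
  "step f B (h :: nat \<Rightarrow> nat \<times> nat list) c = (if c = 0 then (let k = (LEAST k. k \<in> KK f B []) in (k, W f B [] k))
     else (let up = snd (h (pcode c)); k = (LEAST k. k \<in> KK f B up \<and> fst (h (c - 1)) < k) in (k, W f B up k)))"

primrec HH where
  "HH f B 0 = (\<lambda>_. step f B (\<lambda>_. undefined) 0)"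
| "HH f B (Suc c) = (HH f B c)(Suc c := step f B (HH f B c) (Suc c))"

definition val where "val f B c = HH f B c c"

lemma HH_stable: "i \<le> c \<Longrightarrow> HH f B c i = val f B i"
proof (induction c)
  case 0 thus ?case by (simp add: val_def)
next
  case (Suc c) thus ?case by (cases "i = Suc c") (auto simp: val_def)
qed

lemma par_code: "finite s \<Longrightarrow> s \<noteq> {} \<Longrightarrow> set_encode (par s) < set_encode s"
proof -
  assume fs: "finite s" and ne: "s \<noteq> {}"
  have "s = insert (Max s) (par s)" using fs ne Max_in by (auto simp: par_def)
  moreover have "set_encode (insert (Max s) (par s)) = 2 ^ Max s + set_encode (par s)"
    using fs by (intro set_encode_insert) (auto simp: par_def)
  ultimately show ?thesis by (metis less_add_same_cancel2 zero_less_power zero_less_numeral)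
qed

lemma pcode_less: "0 < c \<Longrightarrow> pcode c < c"
proof -
  assume "0 < c"
  have fs: "finite (set_decode c)" by simp
  have "set_decode c \<noteq> {}" using \<open>0 < c\<close> by (metis less_irrefl set_decode_inverse set_encode_empty)
  from par_code[OF fs this] show ?thesis by (simp add: pcode_def)
qed

lemma val_eq: "val f B c = step f B (val f B) c"
proof (cases c)
  case 0 thus ?thesis by (simp add: val_def step_def)
next
  case (Suc d)
  have "val f B c = step f B (HH f B d) (Suc d)" by (simp add: Suc val_def)
  also have "\<dots> = step f B (val f B) (Suc d)"
    using pcode_less[of "Suc d"] by (simp add: step_def HH_stable Let_def)
  finally show ?thesis using Suc by simp
qed

lemma pick0:
  assumes cont: "continuous_on UNIV f" and inf: "\<forall>x. infinite {n. f x n}" and b: "bad f B u"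
  shows "Bsel f B u \<in> B \<and> infinite (KK f B u)"
proof -
  have "\<exists>B0. B0 \<in> B \<and> infinite (Kset f B u \<inter> B0)" using key[OF cont inf b] by blast
  hence "Bsel f B u \<in> B \<and> infinite (Kset f B u \<inter> Bsel f B u)" unfolding Bsel_def by (rule someI_ex)
  thus ?thesis by (simp add: KK_def)
qed

lemma pickW:
  assumes "k \<in> KK f B u"
  shows "ext u (W f B u k) \<and> bad f B (W f B u k) \<and> forces f (W f B u k) k"
proof -
  have "\<exists>l'. ext u l' \<and> bad f B l' \<and> forces f l' k" using assms by (simp add: KK_def Kset_def)
  thus ?thesis unfolding W_def by (rule someI_ex)
qed

lemma inv:
  assumes cont: "continuous_on UNIV f" and inf: "\<forall>x. infinite {n. f x n}" and b0: "bad f B []"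
  shows "bad f B (snd (val f B c)) \<and> forces f (snd (val f B c)) (fst (val f B c)) \<and>
    (0 < c \<longrightarrow> fst (val f B (c - 1)) < fst (val f B c) \<and> fst (val f B c) \<in> KK f B (snd (val f B (pcode c)))
       \<and> ext (snd (val f B (pcode c))) (snd (val f B c)))"
proof (induction c rule: less_induct)
  case (less c)
  show ?case
  proof (cases "c = 0")
    case True
    have "infinite (KK f B [])" using pick0[OF cont inf b0] by simp
    hence "\<exists>k. k \<in> KK f B []" by (metis finite.emptyI ex_in_conv)
    hence k: "(LEAST k. k \<in> KK f B []) \<in> KK f B []" by (rule LeastI_ex)
    have v: "val f B c = ((LEAST k. k \<in> KK f B []), W f B [] (LEAST k. k \<in> KK f B []))"
      using True by (subst val_eq) (simp add: step_def Let_def)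
    show ?thesis using True pickW[OF k] unfolding v by simp
  next
    case False
    define up where "up = snd (val f B (pcode c))"
    define m where "m = fst (val f B (c - 1))"
    have "bad f B up" using less.IH[of "pcode c"] pcode_less[of c] False by (simp add: up_def)
    hence "infinite (KK f B up)" using pick0[OF cont inf] by blast
    hence "\<exists>k. k \<in> KK f B up \<and> m < k" by (auto simp add: infinite_nat_iff_unbounded)
    hence k: "(LEAST k. k \<in> KK f B up \<and> m < k) \<in> KK f B up \<and> m < (LEAST k. k \<in> KK f B up \<and> m < k)"
      by (rule LeastI_ex)
    have v: "val f B c = ((LEAST k. k \<in> KK f B up \<and> m < k), W f B up (LEAST k. k \<in> KK f B up \<and> m < k))"
      using False by (subst val_eq) (simp add: step_def Let_def up_def m_def)
    show ?thesis using pickW[OF conjunct1[OF k]] k False unfolding v by (simp add: up_def m_def)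
  qed
qed

lemma chain_lim:
  assumes e: "\<forall>n. ext (U n) (U (Suc n))"
  shows "\<exists>x. \<forall>n. x \<in> cyl (U n)"
proof -
  have len: "n \<le> length (U n)" for n
  proof (induction n)
    case (Suc n) thus ?case using e by (metis ext_def Suc_le_eq le_less_trans)
  qed simp
  have pre: "take (length (U n)) (U m) = U n" if "n \<le> m" for n m
    using that
  proof (induction m rule: dec_induct)
    case (step m)
    have l: "length (U n) \<le> length (U m)" proof -
      have "length (take (length (U n)) (U m)) = length (U n)" using step.IH by simp
      thus ?thesis by simp
    qed
    have "take (length (U n)) (U (Suc m)) = take (length (U n)) (take (length (U m)) (U (Suc m)))"
      using l by (simp add: min_def)
    also have "\<dots> = take (length (U n)) (U m)" using e by (simp add: ext_def)
    finally show ?case using step.IH by simp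
  qed simp
  have nth: "U m ! i = U n ! i" if "n \<le> m" "i < length (U n)" for n m i
    using pre[OF that(1)] that(2) by (metis nth_take)
  define x where "x i = U (Suc i) ! i" for i
  have "x \<in> cyl (U n)" for n
  proof -
    have "x i = U n ! i" if "i < length (U n)" for i
    proof -
      have "U (max n (Suc i)) ! i = U n ! i" using nth that by simp
      moreover have "U (max n (Suc i)) ! i = U (Suc i) ! i" using nth len[of "Suc i"] by simp
      ultimately show ?thesis by (simp add: x_def)
    qed
    thus ?thesis by (simp add: cyl_def)
  qed
  thus ?thesis by blast
qed

lemma restr_facts:
  assumes "strict_mono \<sigma>"
  shows "finite (restr \<sigma> n)" "restr \<sigma> (Suc n) \<noteq> {}" "par (restr \<sigma> (Suc n)) = restr \<sigma> n"
    "card (restr \<sigma> n) = n"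
proof -
  show "finite (restr \<sigma> n)" by (simp add: restr_def)
  show "restr \<sigma> (Suc n) \<noteq> {}" by (auto simp add: restr_def)
  have "Max (restr \<sigma> (Suc n)) = \<sigma> n"
    using assms by (intro Max_eqI) (auto simp: restr_def strict_mono_less_eq)
  moreover have "restr \<sigma> (Suc n) = insert (\<sigma> n) (restr \<sigma> n)" by (auto simp: restr_def lessThan_Suc)
  moreover have "\<sigma> n \<notin> restr \<sigma> n" using assms by (auto simp: restr_def strict_mono_def) (metis less_irrefl)
  ultimately show "par (restr \<sigma> (Suc n)) = restr \<sigma> n" by (simp add: par_def)
  have "inj_on \<sigma> {..<n}" using strict_mono_imp_inj_on[OF assms] .
  thus "card (restr \<sigma> n) = n" by (simp add: restr_def card_image)
qed

theorem theorem4: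
  fixes \<A> \<B> :: "nat set set"
  assumes "\<forall>A\<in>\<A>. infinite A" and "\<forall>B\<in>\<B>. infinite B"
    and "hereditary \<A>" and "hereditary \<B>"
    and "orthogonal \<A> \<B>"
    and "analytic_fam \<A>"
    and "\<not> countably_generated_in \<A> (perp \<B>)"
  shows "\<exists>\<phi> :: nat set \<Rightarrow> nat. inj_on \<phi> Sigma_tree \<and>
    (\<forall>\<sigma>. strict_mono \<sigma> \<longrightarrow>
        (\<exists>A\<in>\<A>. {restr \<sigma> n | n. True} = {s\<in>Sigma_tree. \<phi> s \<in> A})) \<and>
    (\<forall>t\<in>Sigma_tree.
        (\<exists>B\<in>\<B>. {t \<union> {n} | n. \<forall>m\<in>t. m < n} = {s\<in>Sigma_tree. \<phi> s \<in> B}))"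
proof -
  have Ane: "\<A> \<noteq> {}"
  proof
    assume "\<A> = {}"
    hence "countably_generated_in \<A> (perp \<B>)" unfolding countably_generated_in_def
      by (intro exI[of _ "{}"]) auto
    thus False using assms(7) by simp
  qed
  then obtain f :: "(nat \<Rightarrow> nat) \<Rightarrow> (nat \<Rightarrow> bool)" where cont: "continuous_on UNIV f"
    and img: "(\<lambda>x. {n. f x n}) ` UNIV = \<A>" using assms(6) by (auto simp: analytic_fam_def)
  have fA: "{n. f x n} \<in> \<A>" for x using img by blast
  have inf: "\<forall>x. infinite {n. f x n}" using fA assms(1) by blast
  have "fam f [] = \<A>" using img by (simp add: fam_def cyl_def)
  hence b0: "bad f \<B> []" using assms(7) by (simp add: bad_def)
  note I = inv[OF cont inf b0]
  define \<phi> where "\<phi> s = fst (val f \<B> (set_encode s))" for s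
  have sm: "strict_mono (\<lambda>c. fst (val f \<B> c))"
    unfolding strict_mono_Suc_iff
  proof
    fix n show "fst (val f \<B> n) < fst (val f \<B> (Suc n))" using I[of "Suc n"] by simp
  qed
  have inj: "inj_on \<phi> Sigma_tree"
  proof (rule inj_onI)
    fix s t assume "s \<in> Sigma_tree" "t \<in> Sigma_tree" "\<phi> s = \<phi> t"
    hence "set_encode s = set_encode t" "finite s" "finite t"
      using strict_mono_eq[OF sm] by (auto simp: \<phi>_def Sigma_tree_def)
    thus "s = t" using set_encode_eq by blast
  qed
  have child: "\<phi> s \<in> KK f \<B> (snd (val f \<B> (set_encode (par s)))) \<and>
     ext (snd (val f \<B> (set_encode (par s)))) (snd (val f \<B> (set_encode s)))"
    if "finite s" "s \<noteq> {}" for s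
  proof -
    have pos: "0 < set_encode s" using par_code[OF that] by simp
    have "pcode (set_encode s) = set_encode (par s)" using that(1) by (simp add: pcode_def)
    thus ?thesis using I[of "set_encode s"] pos by (simp add: \<phi>_def)
  qed
  have force: "forces f (snd (val f \<B> (set_encode s))) (\<phi> s)" for s using I by (simp add: \<phi>_def)
  have badall: "bad f \<B> (snd (val f \<B> c))" for c using I by simp
  have P1: "\<exists>A\<in>\<A>. {restr \<sigma> n | n. True} = {s\<in>Sigma_tree. \<phi> s \<in> A}" if sig: "strict_mono \<sigma>" for \<sigma>
  proof -
    define U where "U n = snd (val f \<B> (set_encode (restr \<sigma> n)))" for n
    have "ext (U n) (U (Suc n))" for n
      using child[OF restr_facts(1)[OF sig, of "Suc n"] restr_facts(2)[OF sig, of n]] restr_facts(3)[OF sig] by (simp add: U_def)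
    then obtain x where x: "\<And>n. x \<in> cyl (U n)" using chain_lim by blast
    define E where "E = range (\<lambda>n. \<phi> (restr \<sigma> n))"
    have "E \<subseteq> {n. f x n}" using force x by (auto simp: E_def forces_def U_def)
    moreover have "infinite E" unfolding E_def
    proof (rule range_inj_infinite, rule injI)
      fix m n assume "\<phi> (restr \<sigma> m) = \<phi> (restr \<sigma> n)"
      hence "restr \<sigma> m = restr \<sigma> n" using inj restr_facts(1)[OF sig]
        by (auto simp: inj_on_def Sigma_tree_def)
      thus "m = n" using restr_facts(4)[OF sig] by metis
    qed
    ultimately have EA: "E \<in> \<A>" using assms(3) fA unfolding hereditary_def by blast
    have "{restr \<sigma> n | n. True} = {s\<in>Sigma_tree. \<phi> s \<in> E}"
    proof (intro equalityI subsetI)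
      fix s assume "s \<in> {restr \<sigma> n | n. True}"
      thus "s \<in> {s\<in>Sigma_tree. \<phi> s \<in> E}" using restr_facts(1)[OF sig]
        by (auto simp: E_def Sigma_tree_def)
    next
      fix s assume "s \<in> {s\<in>Sigma_tree. \<phi> s \<in> E}"
      then obtain n where "s \<in> Sigma_tree" "\<phi> s = \<phi> (restr \<sigma> n)" by (auto simp: E_def)
      hence "s = restr \<sigma> n" using inj restr_facts(1)[OF sig] by (auto simp: inj_on_def Sigma_tree_def)
      thus "s \<in> {restr \<sigma> n | n. True}" by blast
    qed
    thus ?thesis using EA by blast
  qed
  have P2: "\<exists>B\<in>\<B>. {t \<union> {n} | n. \<forall>m\<in>t. m < n} = {s\<in>Sigma_tree. \<phi> s \<in> B}" if t: "t \<in> Sigma_tree" for t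
  proof -
    have ft: "finite t" using t by (simp add: Sigma_tree_def)
    define C where "C = {t \<union> {n} | n. \<forall>m\<in>t. m < n}"
    define u where "u = snd (val f \<B> (set_encode t))"
    have Bs: "Bsel f \<B> u \<in> \<B>" using pick0[OF cont inf badall] by (simp add: u_def)
    have Cfin: "finite c" "c \<noteq> {}" "par c = t" if "c \<in> C" for c
    proof -
      obtain n where n: "c = insert n t" "\<forall>m\<in>t. m < n" using \<open>c \<in> C\<close> by (auto simp: C_def)
      show "finite c" "c \<noteq> {}" using n ft by auto
      have "Max c = n" using n ft by (intro Max_eqI) auto
      moreover have "n \<notin> t" using n by auto
      ultimately show "par c = t" using n by (auto simp: par_def)
    qed
    define E where "E = \<phi> ` C"
    have "E \<subseteq> KK f \<B> u" using child Cfin by (auto simp: E_def u_def)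
    hence EB0: "E \<subseteq> Bsel f \<B> u" by (auto simp: KK_def)
    define N where "N = {n. \<forall>m\<in>t. m < n}"
    have "{Suc (Max (insert 0 t))..} \<subseteq> N" proof
      fix x assume "x \<in> {Suc (Max (insert 0 t))..}"
      moreover have "m \<le> Max (insert 0 t)" if "m \<in> t" for m using ft that by simp
      ultimately show "x \<in> N" by (force simp: N_def)
    qed
    hence "infinite N" using infinite_Ici finite_subset by blast
    moreover have "inj_on (\<lambda>n. insert n t) N"
      by (rule inj_onI) (auto simp: N_def)
    moreover have "C = (\<lambda>n. insert n t) ` N" by (auto simp: C_def N_def)
    ultimately have "infinite C" using finite_imageD by metis
    moreover have "inj_on \<phi> C" using inj Cfin by (auto simp: inj_on_def Sigma_tree_def)
    ultimately have "infinite E" unfolding E_def using finite_imageD by blast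
    hence EB: "E \<in> \<B>" using assms(4) Bs EB0 unfolding hereditary_def by blast
    have "C = {s\<in>Sigma_tree. \<phi> s \<in> E}"
    proof (intro equalityI subsetI)
      fix s assume "s \<in> C" thus "s \<in> {s\<in>Sigma_tree. \<phi> s \<in> E}" using Cfin by (auto simp: E_def Sigma_tree_def)
    next
      fix s assume "s \<in> {s\<in>Sigma_tree. \<phi> s \<in> E}"
      then obtain c where "s \<in> Sigma_tree" "c \<in> C" "\<phi> s = \<phi> c" by (auto simp: E_def)
      moreover have "c \<in> Sigma_tree" using Cfin \<open>c \<in> C\<close> by (simp add: Sigma_tree_def)
      ultimately have "s = c" using inj by (auto simp: inj_on_def)
      thus "s \<in> C" using \<open>c \<in> C\<close> by simp
    qed
    thus ?thesis using EB by (auto simp: C_def)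
  qed
  show ?thesis using inj P1 P2 by blast
qed

end
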